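(* Let $H=(V,E)$ be a 3-uniform hypergraph and let real numbers $\gamma_a$ ($a\in V$) satisfy $\gamma_a+\gamma_b+\gamma_c=-1$ for every edge $\{a,b,c\}\in E$ (e.g. $\gamma_a=\langle\mathbf v_a,\mathbf v_\emptyset\rangle$ for a feasible solution of the SDP: unit vectors $\mathbf v_a$, $a\in V\cup\{\emptyset\}$, with $\mathbf v_a+\mathbf v_b+\mathbf v_c=-\mathbf v_\emptyset$ for every edge). Define $\ell_0=-1$, $u_0=1$ and for $j\ge0$: if $j$ is even, $\ell_{j+1}=\ell_j$, $u_{j+1}=\frac{\ell_j+u_j}{2}$; if $j$ is odd, $\ell_{j+1}=\frac{\ell_j+u_j}{2}$, $u_{j+1}=u_j$; let $I_j=[\ell_j,u_j]$ and $S_{j+1}=\{a\in V:\gamma_a\in I_j\setminus I_{j+1}\}$. Then for every $j\ge0$ and every edge $e\in E$ such that $\gamma_v\in I_j$ for all $v\in e$, we have $|S_{j+1}\cap e|\le1$. *)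

theory Defs
  imports Complex_Main
begin

definition three_uniform_hypergraph :: "'a set \<Rightarrow> 'a set set \<Rightarrow> bool" where
  "three_uniform_hypergraph V E \<longleftrightarrow> finite V \<and> (\<forall>e\<in>E. e \<subseteq> V \<and> card e = 3)"

fun lu :: "nat \<Rightarrow> real \<times> real" where
  "lu 0 = (-1, 1)"
| "lu (Suc j) = (let (l, u) = lu j in
      if even j then (l, (l + u) / 2) else ((l + u) / 2, u))"

definition ell :: "nat \<Rightarrow> real" where "ell j = fst (lu j)"
definition upp :: "nat \<Rightarrow> real" where "upp j = snd (lu j)"

definition Ival :: "nat \<Rightarrow> real set" where "Ival j = {ell j .. upp j}"

text \<open>S_{j+1} = {a in V. gamma a in I_j - I_{j+1}}; here S_set V gamma j denotes S_j for j >= 1.\<close>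
definition S_set :: "'a set \<Rightarrow> ('a \<Rightarrow> real) \<Rightarrow> nat \<Rightarrow> 'a set" where
  "S_set V \<gamma> j = {a \<in> V. \<gamma> a \<in> Ival (j - 1) - Ival j}"

end

theory Submission
  imports Defs
begin

lemma ell_Suc: "ell (Suc j) = (if even j then ell j else (ell j + upp j)/2)"
  by (simp add: ell_def upp_def split_def Let_def)

lemma upp_Suc: "upp (Suc j) = (if even j then (ell j + upp j)/2 else upp j)"
  by (simp add: ell_def upp_def split_def Let_def)

lemma lu_inv: "(even j \<longrightarrow> 2*ell j + upp j = -1) \<and> (odd j \<longrightarrow> ell j + 2*upp j = -1)"
proof (induction j)
  case 0
  then show ?case by (simp add: ell_def upp_def)
next
  case (Suc j)
  then show ?case by (auto simp: ell_Suc upp_Suc field_simps)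
qed

theorem lemma3p4:
  fixes V :: "'a set" and E :: "'a set set" and \<gamma> :: "'a \<Rightarrow> real"
  assumes "three_uniform_hypergraph V E"
    and "\<forall>e\<in>E. (\<Sum>v\<in>e. \<gamma> v) = -1"
  shows "\<forall>j. \<forall>e\<in>E. (\<forall>v\<in>e. \<gamma> v \<in> Ival j) \<longrightarrow> card (S_set V \<gamma> (Suc j) \<inter> e) \<le> 1"
proof (intro allI ballI impI, rule ccontr)
  fix j e
  assume eE: "e \<in> E" and inI: "\<forall>v\<in>e. \<gamma> v \<in> Ival j"
    and c: "\<not> card (S_set V \<gamma> (Suc j) \<inter> e) \<le> 1"
  have ce: "card e = 3" using assms(1) eE by (simp add: three_uniform_hypergraph_def)
  hence fe: "finite e" using card.infinite by fastforce
  have "finite (S_set V \<gamma> (Suc j) \<inter> e)" using fe by simp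
  then obtain a b where ab: "a \<in> S_set V \<gamma> (Suc j) \<inter> e" "b \<in> S_set V \<gamma> (Suc j) \<inter> e" "a \<noteq> b"
    using c by (auto simp: One_nat_def card_le_Suc0_iff_eq)
  have "card (e - {a,b}) = 1" using ab ce fe by (simp add: card_Diff_subset)
  then obtain c where c1: "e - {a,b} = {c}" by (meson card_1_singletonE)
  hence eq: "e = {a,b,c}" and cab: "c \<noteq> a" "c \<noteq> b" using ab by auto
  have sum: "\<gamma> a + \<gamma> b + \<gamma> c = -1"
  proof -
    have "sum \<gamma> e = -1" using assms(2) eE by blast
    then show ?thesis unfolding eq using ab cab by (simp add: add.assoc)
  qed
  have ga: "\<gamma> a \<in> Ival j - Ival (Suc j)" and gb: "\<gamma> b \<in> Ival j - Ival (Suc j)"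
    using ab by (auto simp: S_set_def)
  have gc: "\<gamma> c \<in> Ival j" using inI eq by auto
  show False
  proof (cases "even j")
    case True
    then show ?thesis using lu_inv[of j] ga gb gc sum
      by (auto simp: Ival_def ell_Suc upp_Suc)
  next
    case False
    then show ?thesis using lu_inv[of j] ga gb gc sum
      by (auto simp: Ival_def ell_Suc upp_Suc)
  qed
qed

end
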